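(* Let $p$ be a prime, $m$ a positive integer, $q=p^m$, $n=q^2+1$. Let $\lambda\in\mathbb{F}_{q^2}^*$ have multiplicative order $r$, where $r\mid (q+1)$ and $\nu_2(r)=\nu_2(q+1)$. Let $\delta\in\mathbb{F}_{q^4}$ be a primitive $rn$-th root of unity with $\delta^n=\lambda$. For a positive integer $s$ with $s\mid (q^2-1)$, let $U_{s(q^2+1)}$ denote the set of all $s(q^2+1)$-th roots of unity in $\mathbb{F}_{q^4}^*$. Define $f(x)=x^{q+1}$ for $x\in U_{r(q^2+1)}$, and for $y_0$ let $f^{-1}(y_0)=\{x\in U_{r(q^2+1)}: f(x)=y_0\}$. Let $T=\{\delta^{-i}: 0\le i\le q^2\}$ and $\lambda^jT=\{\lambda^j\delta^{-i}: 0\le i\le q^2\}$ for $0\le j\le r-1$. Then $f$ maps $U_{r(q^2+1)}$ onto $U_{q^2+1}$. Moreover, for $y_0\in U_{q^2+1}$, if $f(x_0)=y_0$ for some $x_0\in U_{r(q^2+1)}$, then $f^{-1}(y_0)=\{\lambda^jx_0: 0\le j\le r-1\}$ and $|f^{-1}(y_0)\cap\lambda^jT|=1$ for every $0\le j\le r-1$.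
   Context: $\nu_2(\cdot)$ denotes the $2$-adic valuation of a positive integer. *)

theory Defs
  imports "HOL-Computational_Algebra.Computational_Algebra"
begin

definition mult_ord :: "'a::field \<Rightarrow> nat" where
  "mult_ord x = (if \<exists>k>0. x ^ k = 1 then (LEAST k. k > 0 \<and> x ^ k = 1) else 0)"

definition nu2 :: "nat \<Rightarrow> nat" where
  "nu2 n = multiplicity (2::nat) n"

definition roots_unity :: "nat \<Rightarrow> 'a::field set" where
  "roots_unity k = {x. x ^ k = 1}"

end

theory Submission
  imports Defs
begin

lemma card_ru_le:
  fixes k :: nat assumes "k > 0"
  shows "card (roots_unity k :: 'a::field set) \<le> k"
proof -
  define P :: "'a poly" where "P = monom 1 k + [:-1:]"
  have deg: "degree P = k" unfolding P_def using assms
    by (subst degree_add_eq_left) (auto simp: degree_monom_eq)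
  have "P \<noteq> 0" using deg assms by auto
  moreover have "roots_unity k = {x. poly P x = 0}"
    by (auto simp: roots_unity_def P_def poly_monom)
  ultimately show ?thesis using card_poly_roots_bound[of P] deg by simp
qed

lemma fin_ru:
  fixes k :: nat assumes "k > 0"
  shows "finite (roots_unity k :: 'a::field set)"
proof -
  define P :: "'a poly" where "P = monom 1 k + [:-1:]"
  have deg: "degree P = k" unfolding P_def using assms
    by (subst degree_add_eq_left) (auto simp: degree_monom_eq)
  have "P \<noteq> 0" using deg assms by auto
  moreover have "roots_unity k = {x. poly P x = 0}"
    by (auto simp: roots_unity_def P_def poly_monom)
  ultimately show ?thesis using poly_roots_finite[of P] by simp
qed

lemma ord_dvd:
  fixes x :: "'a::field"
  assumes "mult_ord x = k" "k > 0"
  shows "x ^ i = 1 \<longleftrightarrow> k dvd i"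
proof -
  have ex: "\<exists>k>0. x ^ k = 1" using assms unfolding mult_ord_def by (auto split: if_splits)
  hence kdef: "k = (LEAST k. k > 0 \<and> x ^ k = 1)" using assms unfolding mult_ord_def by auto
  have xk: "k > 0 \<and> x ^ k = 1" unfolding kdef using ex by (rule LeastI_ex)
  show ?thesis
  proof
    assume xi: "x ^ i = 1"
    have "x ^ i = x ^ (k * (i div k)) * x ^ (i mod k)"
      by (subst power_add[symmetric]) simp
    hence m: "x ^ (i mod k) = 1" using xi xk by (simp add: power_mult)
    show "k dvd i"
    proof (rule ccontr)
      assume "\<not> k dvd i"
      hence "i mod k > 0" by (simp add: dvd_eq_mod_eq_0)
      hence "k \<le> i mod k" using m unfolding kdef by (intro Least_le) simp
      moreover have "i mod k < k" using xk by simp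
      ultimately show False by linarith
    qed
  next
    assume "k dvd i" thus "x ^ i = 1" using xk by (auto simp: power_mult)
  qed
qed

lemma cyc:
  fixes g :: "'a::field" and k :: nat
  assumes "k > 0" "\<And>i. g ^ i = 1 \<longleftrightarrow> k dvd i"
  shows "roots_unity k = (\<lambda>i. g ^ i) ` {..<k}" "inj_on (\<lambda>i. g ^ i) {..<k}"
proof -
  have g0: "g \<noteq> 0" using assms(2)[of k] assms(1) by (cases k) auto
  show inj: "inj_on (\<lambda>i. g ^ i) {..<k}"
  proof (rule inj_onI)
    fix i j assume ij: "i \<in> {..<k}" "j \<in> {..<k}" "g ^ i = g ^ j"
    have w: "g ^ a = g ^ b \<Longrightarrow> a \<le> b \<Longrightarrow> b < k \<Longrightarrow> a = b" for a b
    proof -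
      assume "g ^ a = g ^ b" "a \<le> b" "b < k"
      have "g ^ a * g ^ (b - a) = g ^ b" using \<open>a \<le> b\<close> by (simp add: power_add[symmetric])
      hence "g ^ a * g ^ (b - a) = g ^ a * 1" using \<open>g ^ a = g ^ b\<close> by simp
      hence "g ^ (b - a) = 1" using g0 by simp
      hence "k dvd (b - a)" using assms(2) by simp
      moreover have "b - a < k" using \<open>b < k\<close> by linarith
      ultimately have "b - a = 0" using dvd_imp_le[of k "b - a"] by linarith
      thus "a = b" using \<open>a \<le> b\<close> by simp
    qed
    show "i = j"
    proof (cases "i \<le> j")
      case True thus ?thesis using ij w by auto
    next
      case False thus ?thesis using ij w[of j i] by auto
    qed
  qed
  have sub: "(\<lambda>i. g ^ i) ` {..<k} \<subseteq> roots_unity k"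
    using assms(2) by (auto simp: roots_unity_def power_mult[symmetric] mult.commute)
  have fin: "finite (roots_unity k :: 'a set)" by (rule fin_ru[OF assms(1)])
  show "roots_unity k = (\<lambda>i. g ^ i) ` {..<k}"
  proof -
    have "card ((\<lambda>i. g ^ i) ` {..<k}) = k" using card_image[OF inj] by simp
    hence "card ((\<lambda>i. g ^ i) ` {..<k}) = card (roots_unity k :: 'a set)"
      using card_ru_le[OF assms(1), where 'a='a] card_mono[OF fin sub] by linarith
    thus ?thesis using card_subset_eq[OF fin sub] by simp
  qed
qed

lemma ord_pos:
  fixes x :: "'a::field"
  assumes "x ^ k = 1" "k > 0"
  shows "mult_ord x > 0"
proof -
  have ex: "\<exists>k>0. x ^ k = 1" using assms by auto
  have "0 < (LEAST k. k > 0 \<and> x ^ k = 1)" using LeastI_ex[of "\<lambda>k. k > 0 \<and> x ^ k = 1"] ex by auto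
  thus ?thesis using ex unfolding mult_ord_def by simp
qed

theorem lemma3p1:
  fixes p m q n r :: nat and lam \<delta> :: "'a::{field,finite}"
  assumes "prime p" and "m > 0" and "q = p ^ m" and "n = q^2 + 1"
    and "card (UNIV :: 'a set) = q ^ 4"
    and "lam \<noteq> 0" and "lam ^ (q^2) = lam"
    and "mult_ord lam = r"
    and "r dvd (q + 1)" and "nu2 r = nu2 (q + 1)"
    and "mult_ord \<delta> = r * n" and "\<delta> ^ n = lam"
  shows "(\<lambda>x. x ^ (q + 1)) ` (roots_unity (r * n) :: 'a set) = roots_unity n
    \<and> (\<forall>y0 \<in> (roots_unity n :: 'a set). \<forall>x0 \<in> roots_unity (r * n). x0 ^ (q + 1) = y0 \<longrightarrow>
          {x \<in> roots_unity (r * n). x ^ (q + 1) = y0} = {lam ^ j * x0 | j. j \<le> r - 1}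
        \<and> (\<forall>j \<le> r - 1. card ({x \<in> roots_unity (r * n). x ^ (q + 1) = y0}
                 \<inter> {lam ^ j * inverse \<delta> ^ i | i. i \<le> q^2}) = 1))"
proof -
  have p2: "p \<ge> 2" using assms(1) by (rule prime_ge_2_nat)
  have "p \<le> p ^ m" using assms(2) p2 by (simp add: self_le_power)
  hence q2: "q \<ge> 2" using p2 assms(3) by linarith
  have "lam * lam ^ (q^2 - 1) = lam * 1"
  proof -
    have "q^2 \<ge> 1" using q2 by simp
    hence "Suc (q^2 - 1) = q^2" by simp
    hence "lam * lam ^ (q^2 - 1) = lam ^ (q^2)" by (metis power_Suc)
    thus ?thesis using assms(7) by simp
  qed
  hence lq: "lam ^ (q^2 - 1) = 1" using assms(6) by simp
  have "q^2 \<ge> 2^2" using power_mono[OF q2, of 2] by simp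
  hence "q^2 - 1 > 0" by simp
  hence r0: "r > 0" using ord_pos[OF lq] assms(8) by simp
  have n0: "n > 0" using assms(4) by simp
  have rn0: "r * n > 0" using r0 n0 by simp
  have ordd: "\<And>i. \<delta> ^ i = 1 \<longleftrightarrow> r * n dvd i" using ord_dvd[OF assms(11) rn0] .
  have ordl: "\<And>i. lam ^ i = 1 \<longleftrightarrow> r dvd i" using ord_dvd[OF assms(8) r0] .
  obtain c where c: "q + 1 = r * c" using assms(9) by (auto elim: dvdE)
  have c0: "c \<noteq> 0" using c by (cases c) auto
  have "multiplicity (2::nat) (r * c) = multiplicity 2 r + multiplicity 2 c"
    using r0 c0 by (intro prime_elem_multiplicity_mult_distrib) auto
  hence "multiplicity (2::nat) c = 0" using assms(10) c unfolding nu2_def by simp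
  hence codd: "odd c" using c0 by (subst (asm) multiplicity_eq_zero_iff) auto
  have cop: "coprime n c"
  proof -
    define d where "d = gcd n c"
    obtain k where k: "q = Suc k" using q2 by (cases q) auto
    have "n = (q + 1) * (q - 1) + 2" using assms(4) unfolding k
      by (simp add: power2_eq_square algebra_simps)
    moreover have "d dvd (q + 1) * (q - 1)" unfolding d_def c by simp
    moreover have "d dvd n" unfolding d_def by simp
    ultimately have "d dvd 2" using dvd_add_right_iff[of d "(q+1)*(q-1)" 2] by simp
    moreover have "odd d" using codd unfolding d_def by (metis dvd_trans gcd_dvd2)
    ultimately have "d = 1"
    proof -
      assume d2: "d dvd 2" and od: "odd d"
      have "d \<le> 2" using dvd_imp_le[OF d2] by simp
      moreover have "d \<noteq> 0" using od by (metis even_zero)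
      moreover have "d \<noteq> 2" using od by auto
      ultimately show "d = 1" by linarith
    qed
    thus ?thesis unfolding d_def by (simp add: coprime_iff_gcd_eq_1)
  qed
  define g where "g = \<delta> ^ (q + 1)"
  have ordg: "\<And>i. g ^ i = 1 \<longleftrightarrow> n dvd i"
  proof -
    fix i
    have "g ^ i = \<delta> ^ (r * (c * i))" unfolding g_def by (simp only: power_mult[symmetric] c mult.assoc)
    hence "g ^ i = 1 \<longleftrightarrow> r * n dvd r * (c * i)" using ordd by simp
    also have "\<dots> \<longleftrightarrow> n dvd c * i" using r0 by simp
    also have "\<dots> \<longleftrightarrow> n dvd i" using cop by (simp add: coprime_dvd_mult_right_iff)
    finally show "g ^ i = 1 \<longleftrightarrow> n dvd i" .
  qed
  note Un = cyc[OF n0 ordg]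
  note Urn = cyc[OF rn0 ordd]
  have part1: "(\<lambda>x. x ^ (q + 1)) ` (roots_unity (r * n) :: 'a set) = roots_unity n"
  proof
    show "(\<lambda>x. x ^ (q + 1)) ` (roots_unity (r * n) :: 'a set) \<subseteq> roots_unity n"
    proof
      fix y assume "y \<in> (\<lambda>x. x ^ (q + 1)) ` (roots_unity (r * n) :: 'a set)"
      then obtain x where x: "x ^ (r * n) = 1" "y = x ^ (q + 1)" by (auto simp: roots_unity_def)
      have "y ^ n = (x ^ (r * n)) ^ c" unfolding x(2) c by (simp add: power_mult[symmetric] mult_ac)
      thus "y \<in> roots_unity n" using x(1) by (simp add: roots_unity_def)
    qed
  next
    show "roots_unity n \<subseteq> (\<lambda>x. x ^ (q + 1)) ` (roots_unity (r * n) :: 'a set)"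
    proof
      fix y :: 'a assume "y \<in> roots_unity n"
      then obtain i where i: "y = g ^ i" using Un(1) by auto
      have "(\<delta> ^ i) ^ (r * n) = 1" using ordd by (simp add: power_mult[symmetric])
      moreover have "y = (\<delta> ^ i) ^ (q + 1)" unfolding i g_def by (metis power_mult mult.commute)
      ultimately show "y \<in> (\<lambda>x. x ^ (q + 1)) ` (roots_unity (r * n) :: 'a set)"
        by (auto simp: roots_unity_def)
    qed
  qed
  have lampow: "lam ^ (j * (q + 1)) = 1" for j using ordl c by simp
  have lampow2: "lam ^ (j * (r * n)) = 1" for j using ordl by simp
  have comp: "(lam ^ j * inverse \<delta> ^ i) ^ (q + 1) = inverse (g ^ i)" for j i
  proof -
    have "(lam ^ j * inverse \<delta> ^ i) ^ (q + 1) = lam ^ (j * (q + 1)) * inverse (\<delta> ^ (i * (q + 1)))"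
      by (simp only: power_mult_distrib power_mult[symmetric] power_inverse)
    also have "\<delta> ^ (i * (q + 1)) = g ^ i" unfolding g_def by (metis power_mult mult.commute)
    also have "lam ^ (j * (q + 1)) * inverse (g ^ i) = inverse (g ^ i)" using lampow by simp
    finally show ?thesis .
  qed
  have part2: "\<forall>y0 \<in> (roots_unity n :: 'a set). \<forall>x0 \<in> roots_unity (r * n). x0 ^ (q + 1) = y0 \<longrightarrow>
          {x \<in> roots_unity (r * n). x ^ (q + 1) = y0} = {lam ^ j * x0 | j. j \<le> r - 1}
        \<and> (\<forall>j \<le> r - 1. card ({x \<in> roots_unity (r * n). x ^ (q + 1) = y0}
                 \<inter> {lam ^ j * inverse \<delta> ^ i | i. i \<le> q^2}) = 1)"
  proof (intro ballI impI conjI allI)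
    fix y0 x0 :: 'a
    assume y0: "y0 \<in> roots_unity n" and x0: "x0 \<in> roots_unity (r * n)" and fx: "x0 ^ (q + 1) = y0"
    have x01: "x0 ^ (r * n) = 1" using x0 by (simp add: roots_unity_def)
    have x00: "x0 \<noteq> 0" using x01 rn0 by (cases "r * n") auto
    show "{x \<in> roots_unity (r * n). x ^ (q + 1) = y0} = {lam ^ j * x0 | j. j \<le> r - 1}"
    proof
      show "{x \<in> roots_unity (r * n). x ^ (q + 1) = y0} \<subseteq> {lam ^ j * x0 | j. j \<le> r - 1}"
      proof
        fix x assume "x \<in> {x \<in> roots_unity (r * n). x ^ (q + 1) = y0}"
        hence x: "x ^ (r * n) = 1" "x ^ (q + 1) = y0" by (auto simp: roots_unity_def)
        define z where "z = x / x0"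
        have z1: "z ^ (r * n) = 1" unfolding z_def using x(1) x01 by (simp add: power_divide)
        have "x0 ^ (q + 1) \<noteq> 0" using x00 by simp
        moreover have e: "x ^ (q + 1) = x0 ^ (q + 1)" using x(2) fx by simp
        ultimately have z2: "z ^ (q + 1) = 1" unfolding z_def power_divide e using divide_self by blast
        obtain a where a: "a < r * n" "z = \<delta> ^ a" using Urn(1) z1 by (auto simp: roots_unity_def)
        have "\<delta> ^ (a * (q + 1)) = 1" using z2 a(2) by (simp only: power_mult)
        hence "r * n dvd a * (q + 1)" using ordd by simp
        moreover have "a * (q + 1) = r * (c * a)" using c by simp
        ultimately have "r * n dvd r * (c * a)" by simp
        hence "n dvd c * a" using r0 by simp
        hence "n dvd a" using cop by (simp add: coprime_dvd_mult_right_iff)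
        then obtain b where b: "a = n * b" by (auto elim: dvdE)
        have "n * b < n * r" using a(1) b by (simp add: mult.commute)
        hence "b < r" by simp
        moreover have "z = lam ^ b" using a(2) b assms(12) by (simp add: power_mult)
        hence "x = lam ^ b * x0" unfolding z_def using x00 by (simp add: field_simps)
        ultimately show "x \<in> {lam ^ j * x0 | j. j \<le> r - 1}" by auto
      qed
    next
      show "{lam ^ j * x0 | j. j \<le> r - 1} \<subseteq> {x \<in> roots_unity (r * n). x ^ (q + 1) = y0}"
      proof
        fix x assume "x \<in> {lam ^ j * x0 | j. j \<le> r - 1}"
        then obtain j where x: "x = lam ^ j * x0" by auto
        have "x ^ (r * n) = lam ^ (j * (r * n)) * x0 ^ (r * n)" unfolding x by (simp only: power_mult_distrib power_mult[symmetric])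
        hence "x ^ (r * n) = 1" using lampow2 x01 by simp
        moreover have "x ^ (q + 1) = lam ^ (j * (q + 1)) * x0 ^ (q + 1)" unfolding x by (simp only: power_mult_distrib power_mult[symmetric])
        hence "x ^ (q + 1) = y0" using lampow fx by simp
        ultimately show "x \<in> {x \<in> roots_unity (r * n). x ^ (q + 1) = y0}" by (simp add: roots_unity_def)
      qed
    qed
    fix j :: nat
    have "inverse y0 \<in> roots_unity n" using y0 by (simp add: roots_unity_def power_inverse)
    then obtain i0 where i0: "i0 < n" "g ^ i0 = inverse y0" using Un(1) by auto
    define w where "w = lam ^ j * inverse \<delta> ^ i0"
    have "{x \<in> roots_unity (r * n). x ^ (q + 1) = y0} \<inter> {lam ^ j * inverse \<delta> ^ i | i. i \<le> q^2} = {w}"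
    proof
      show "{w} \<subseteq> {x \<in> roots_unity (r * n). x ^ (q + 1) = y0} \<inter> {lam ^ j * inverse \<delta> ^ i | i. i \<le> q^2}"
      proof -
        have "w ^ (r * n) = lam ^ (j * (r * n)) * inverse (\<delta> ^ (i0 * (r * n)))"
          unfolding w_def by (simp only: power_mult_distrib power_mult[symmetric] power_inverse)
        moreover have "\<delta> ^ (i0 * (r * n)) = 1" using ordd by simp
        ultimately have "w ^ (r * n) = 1" using lampow2 by simp
        moreover have "w ^ (q + 1) = y0" unfolding w_def comp i0(2) by simp
        moreover have "i0 \<le> q^2" using i0(1) assms(4) by simp
        ultimately show ?thesis unfolding w_def by (auto simp: roots_unity_def)
      qed
    next
      show "{x \<in> roots_unity (r * n). x ^ (q + 1) = y0} \<inter> {lam ^ j * inverse \<delta> ^ i | i. i \<le> q^2} \<subseteq> {w}"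
      proof
        fix v assume "v \<in> {x \<in> roots_unity (r * n). x ^ (q + 1) = y0} \<inter> {lam ^ j * inverse \<delta> ^ i | i. i \<le> q^2}"
        then obtain i where i: "i \<le> q^2" "v = lam ^ j * inverse \<delta> ^ i" "v ^ (q + 1) = y0" by auto
        have "inverse (g ^ i) = y0" using i comp by simp
        hence "g ^ i = inverse y0" by (metis inverse_inverse_eq)
        hence "g ^ i = g ^ i0" using i0(2) by simp
        moreover have "i < n" using i(1) assms(4) by simp
        ultimately have "i = i0" using Un(2) i0(1) by (auto dest: inj_onD)
        thus "v \<in> {w}" using i(2) w_def by simp
      qed
    qed
    thus "card ({x \<in> roots_unity (r * n). x ^ (q + 1) = y0} \<inter> {lam ^ j * inverse \<delta> ^ i | i. i \<le> q^2}) = 1"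
      by simp
  qed
  show ?thesis using part1 part2 by blast
qed

end
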